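(* Let $q\ge 3$ be odd and $n\ge 1$. There exists an ordering of all words of $\mathbb{Z}_q^{n}$ in which consecutive words have Lee distance $1$, beginning with $(0,0,\ldots,0)$ and ending with $(1,1,\ldots,1)$.
   Context: Lee distance between $v,u\in\mathbb{Z}_q^{n}$ is $\sum_{i}\min\{|v_i-u_i|,q-|v_i-u_i|\}$, entries regarded as integers in $\{0,\ldots,q-1\}$. *)

theory Defs
  imports Main
begin

definition words :: "nat \<Rightarrow> nat \<Rightarrow> nat list set" where
  "words q n = {v. length v = n \<and> (\<forall>x\<in>set v. x < q)}"

text \<open>Lee weight of a coordinate difference, entries regarded as integers in {0..q-1}.\<close>
definition lee_coord :: "nat \<Rightarrow> nat \<Rightarrow> nat \<Rightarrow> nat" where
  "lee_coord q a b = min (nat \<bar>int a - int b\<bar>) (q - nat \<bar>int a - int b\<bar>)"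

definition lee_dist :: "nat \<Rightarrow> nat list \<Rightarrow> nat list \<Rightarrow> nat" where
  "lee_dist q v u = (\<Sum>i<length v. lee_coord q (v ! i) (u ! i))"

end

theory Submission
  imports Defs
begin

definition adj :: "nat \<Rightarrow> nat list \<Rightarrow> nat list \<Rightarrow> bool" where
  "adj q u v = (length u = length v \<and> lee_dist q u v = 1)"

fun lay :: "nat \<Rightarrow> nat list list \<Rightarrow> nat \<Rightarrow> nat list list" where
  "lay q P 0 = []"
| "lay q P (Suc m) = lay q P m @ map (Cons ((q - m) mod q)) (if even m then P else rev P)"

fun hp :: "nat \<Rightarrow> nat \<Rightarrow> nat list list" where
  "hp q 0 = [[]]"
| "hp q (Suc n) = lay q (hp q n) q"

lemma lee_dist_Cons: "lee_dist q (x # v) (y # u) = lee_coord q x y + lee_dist q v u"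
  unfolding lee_dist_def by (simp only: length_Cons sum.lessThan_Suc_shift nth_Cons_0 nth_Cons_Suc)

lemma lee_coord_same: "lee_coord q a a = 0"
  unfolding lee_coord_def by simp

lemma lee_dist_same: "lee_dist q u u = 0"
  unfolding lee_dist_def by (simp add: lee_coord_same)

lemma lee_coord_sym: "lee_coord q a b = lee_coord q b a"
  unfolding lee_coord_def by (simp add: abs_minus_commute)

lemma lee_dist_sym: "length u = length v \<Longrightarrow> lee_dist q u v = lee_dist q v u"
  unfolding lee_dist_def by (simp add: lee_coord_sym)

lemma adj_sym: "adj q u v = adj q v u"
  unfolding adj_def using lee_dist_sym by metis

lemma adj_Cons_same: "adj q (x # u) (x # v) = adj q u v"
  unfolding adj_def by (simp add: lee_dist_Cons lee_coord_same)

lemma adj_Cons_diff: "adj q (x # u) (y # u) = (lee_coord q x y = 1)"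
  unfolding adj_def by (simp add: lee_dist_Cons lee_dist_same)

lemma coord_step:
  assumes "q \<ge> 3" "Suc m < q"
  shows "lee_coord q ((q - m) mod q) ((q - Suc m) mod q) = 1"
proof (cases m)
  case 0
  then show ?thesis using assms unfolding lee_coord_def by auto
next
  case (Suc k)
  then have "(q - m) mod q = q - m" "(q - Suc m) mod q = q - Suc m" using assms by auto
  then show ?thesis using assms unfolding lee_coord_def by auto
qed

lemma c_inj:
  fixes q k m :: nat
  assumes "k < q" "m < q" "(q - k) mod q = (q - m) mod q"
  shows "k = m"
proof -
  have A: "\<And>k::nat. k < q \<Longrightarrow> (q - k) mod q = (if k = 0 then 0 else q - k)" by auto
  show ?thesis using assms A[of k] A[of m] by (auto split: if_splits)
qed

lemma c_onto:
  fixes q x :: nat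
  assumes "x < q" shows "x \<in> (\<lambda>k. (q - k) mod q) ` {..<q}"
proof (cases "x = 0")
  case True
  then show ?thesis using assms by (intro image_eqI[of _ _ 0]) auto
next
  case False
  then show ?thesis using assms by (intro image_eqI[of _ _ "q - x"]) auto
qed

lemma lay_props:
  assumes q3: "q \<ge> 3" and ne: "P \<noteq> []" and dP: "distinct P"
    and sP: "successively (adj q) P" and lP: "\<forall>w\<in>set P. length w = n"
    and m1: "1 \<le> m" and mq: "m \<le> q"
  shows "distinct (lay q P m) \<and> successively (adj q) (lay q P m)
    \<and> set (lay q P m) = {x # w | x w. x \<in> (\<lambda>k. (q - k) mod q) ` {..<m} \<and> w \<in> set P}
    \<and> lay q P m \<noteq> [] \<and> hd (lay q P m) = 0 # hd P
    \<and> last (lay q P m) = ((q - (m - 1)) mod q) # (if even (m - 1) then last P else hd P)"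
  using m1 mq
proof (induction m rule: dec_induct)
  case base
  have "successively (adj q) (map (Cons 0) P)"
    using sP by (simp add: successively_map adj_Cons_same)
  then show ?case using ne dP by (auto simp: distinct_map hd_map last_map)
next
  case (step m)
  let ?c = "\<lambda>k. (q - k) mod q"
  let ?B = "map (Cons (?c m)) (if even m then P else rev P)"
  from step have IH: "distinct (lay q P m)" "successively (adj q) (lay q P m)"
    "set (lay q P m) = {x # w | x w. x \<in> ?c ` {..<m} \<and> w \<in> set P}"
    "lay q P m \<noteq> []" "hd (lay q P m) = 0 # hd P"
    "last (lay q P m) = ?c (m - 1) # (if even (m - 1) then last P else hd P)" by auto
  have mq: "m < q" using step by auto
  have sB: "successively (adj q) ?B"
    using sP by (auto simp: successively_map adj_Cons_same adj_sym)
  have dB: "distinct ?B" using dP by (auto simp: distinct_map)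
  have disj: "set (lay q P m) \<inter> set ?B = {}"
  proof -
    { fix k assume "k < m" "?c k = ?c m"
      then have "k = m" using c_inj[of k q m] mq by simp
      with \<open>k < m\<close> have False by simp }
    then show ?thesis using IH(3) by (auto simp del: mod_less) (metis mod_less)
  qed
  have hdB: "hd ?B = ?c m # (if even m then hd P else last P)"
    using ne by (auto simp: hd_map hd_rev)
  have lastB: "last ?B = ?c m # (if even m then last P else hd P)"
    using ne by (auto simp: last_map last_rev)
  have m0: "m \<ge> 1" using step by auto
  have link: "adj q (last (lay q P m)) (hd ?B)"
  proof -
    have e: "(if even (m - 1) then last P else hd P) = (if even m then hd P else last P)"
      using m0 by (cases m) auto
    have "Suc (m - 1) < q" using mq m0 by auto
    then have "lee_coord q (?c (m - 1)) (?c (Suc (m - 1))) = 1" using coord_step[OF q3] by blast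
    then have "lee_coord q (?c (m - 1)) (?c m) = 1" using m0 by simp
    then show ?thesis unfolding IH(6) hdB e by (simp add: adj_Cons_diff)
  qed
  have s: "successively (adj q) (lay q P m @ ?B)"
    using IH(2) sB link IH(4) ne by (simp add: successively_append_iff)
  have st: "set (lay q P (Suc m)) = {x # w | x w. x \<in> ?c ` {..<Suc m} \<and> w \<in> set P}"
    using IH(3) by (auto simp: lessThan_Suc)
  show ?case using IH dB disj s st lastB ne by simp
qed

lemma words_Suc: "words q (Suc n) = {x # w | x w. x < q \<and> w \<in> words q n}"
  unfolding words_def by (auto simp: length_Suc_conv)

lemma hp_props:
  assumes "q \<ge> 3" "odd q"
  shows "distinct (hp q n) \<and> successively (adj q) (hp q n) \<and> set (hp q n) = words q n
    \<and> hp q n \<noteq> [] \<and> hd (hp q n) = replicate n 0 \<and> last (hp q n) = replicate n 1"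
proof (induction n)
  case 0
  then show ?case by (auto simp: words_def)
next
  case (Suc n)
  have lP: "\<forall>w\<in>set (hp q n). length w = n" using Suc by (auto simp: words_def)
  have L: "distinct (lay q (hp q n) q) \<and> successively (adj q) (lay q (hp q n) q)
    \<and> set (lay q (hp q n) q) = {x # w | x w. x \<in> (\<lambda>k. (q - k) mod q) ` {..<q} \<and> w \<in> set (hp q n)}
    \<and> lay q (hp q n) q \<noteq> [] \<and> hd (lay q (hp q n) q) = 0 # hd (hp q n)
    \<and> last (lay q (hp q n) q) = ((q - (q - 1)) mod q) # (if even (q - 1) then last (hp q n) else hd (hp q n))"
    using lay_props[OF assms(1), of "hp q n" n q] Suc lP assms by auto
  have img: "(\<lambda>k. (q - k) mod q) ` {..<q} = {..<q}"
    using c_onto by fastforce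
  have ev: "even (q - 1)" using assms by auto
  have c1: "(q - (q - 1)) mod q = 1" using assms by auto
  show ?case using L Suc img ev c1 by (auto simp: words_Suc)
qed

theorem lemma4:
  fixes q n :: nat
  assumes "q \<ge> 3" and "odd q" and "n \<ge> 1"
  shows "\<exists>ws :: nat list list.
           distinct ws \<and> set ws = words q n \<and>
           (\<forall>i. Suc i < length ws \<longrightarrow> lee_dist q (ws ! i) (ws ! Suc i) = 1) \<and>
           hd ws = replicate n 0 \<and> last ws = replicate n 1"
proof -
  have H: "distinct (hp q n) \<and> successively (adj q) (hp q n) \<and> set (hp q n) = words q n
    \<and> hp q n \<noteq> [] \<and> hd (hp q n) = replicate n 0 \<and> last (hp q n) = replicate n 1"
    using hp_props[OF assms(1,2)] by blast
  have "\<forall>i. Suc i < length (hp q n) \<longrightarrow> lee_dist q (hp q n ! i) (hp q n ! Suc i) = 1"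
    using H successively_nth[of "adj q" "hp q n"] unfolding adj_def by blast
  then show ?thesis using H by blast
qed

end
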